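(* Let $X=(X_1,X_2)$ and $Y$ where $X_1,Y$ are uniform on $\{1,2,3\}$, $X_2\sim\mathrm{Bern}(p)$ with $0<p\le\frac12$, and $X_1,X_2,Y$ are mutually independent. Let $f_1(X,Y)=\mathbf 1\{X_1=Y\}$ and $f_2(X,Y)=X_2$, with Hamming distortion $d_i(a,b)=\mathbf 1\{a\ne b\}$, and let $D_1=0$ and $0\le D_2\le p$ with $D_2<\frac12$. Then every triple $(R_0,R_X,R_Y)$ with $R_0>\log_2 3$, $R_X>H_b(p)-H_b(D_2)$, and $R_Y>H_b(1/3)$ is achievable with distortions $(D_1,D_2)$; in particular, for $R_0>H(X_1|Y)$ the sum rate $R_X+R_Y$ can be made arbitrarily close to $H(f_1(X,Y))+H_b(p)-H_b(D_2)$.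
   Context: $H_b(q)=-q\log_2q-(1-q)\log_2(1-q)$ is the binary entropy function. Setup: finite alphabets, $(X_i,Y_i)_{i\ge1}$ i.i.d. copies of $(X,Y)$, functions $f_i:\mathcal X\times\mathcal Y\to\mathcal F_i$, distortions $d_i:\mathcal F_i\times\mathcal F_i\to\mathbb R_{\ge0}$. An $(n,R_0,R_X,R_Y)$ code consists of encoders $\varphi_0:\mathcal X^n\to\{1,\dots,2^{nR_0}\}$, $\varphi_X:\mathcal X^n\to\{1,\dots,2^{nR_X}\}$, $\varphi_Y:\mathcal Y^n\times\{1,\dots,2^{nR_0}\}\to\{1,\dots,2^{nR_Y}\}$ and decoders $\psi_i:\{1,\dots,2^{nR_X}\}\times\{1,\dots,2^{nR_Y}\}\to\mathcal F_i^n$; with $\hat F_i=\psi_i(\varphi_X(\mathbf X),\varphi_Y(\varphi_0(\mathbf X),\mathbf Y))$ its average distortions are $\frac1n\sum_{j=1}^n\mathbb E\,d_i(f_i(X_j,Y_j),(\hat F_i)_j)$. A triple is achievable with distortions $D_1,D_2$ if for every $\varepsilon>0$ and all large $n$ there is a code with average distortions at most $D_1$, $D_2$. *)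

theory Defs
  imports "HOL-Probability.Probability"
begin

text \<open>Binary entropy (base 2), with the convention 0 log 0 = 0
  (automatic, since log 2 0 = 0 in Isabelle).\<close>
definition Hb :: "real \<Rightarrow> real" where
  "Hb q = - q * log 2 q - (1 - q) * log 2 (1 - q)"

definition entropy_pmf :: "'a pmf \<Rightarrow> real" where
  "entropy_pmf q = - (\<Sum>x\<in>set_pmf q. pmf q x * log 2 (pmf q x))"

definition cond_entropy_pmf :: "('a \<times> 'b) pmf \<Rightarrow> real" where
  "cond_entropy_pmf q = entropy_pmf q - entropy_pmf (map_pmf snd q)"

definition msgs :: "nat \<Rightarrow> real \<Rightarrow> nat" where
  "msgs n R = nat \<lfloor>2 powr (real n * R)\<rfloor>"

definition blocks :: "'a set \<Rightarrow> nat \<Rightarrow> 'a list set" where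
  "blocks A n = {zs. set zs \<subseteq> A \<and> length zs = n}"

definition is_code ::
  "nat \<Rightarrow> real \<Rightarrow> real \<Rightarrow> real \<Rightarrow> ('x list \<Rightarrow> nat) \<Rightarrow> ('x list \<Rightarrow> nat)
     \<Rightarrow> ('y list \<Rightarrow> nat \<Rightarrow> nat) \<Rightarrow> bool" where
  "is_code n R0 RX RY phi0 phiX phiY \<longleftrightarrow>
     (\<forall>xs. length xs = n \<longrightarrow> phi0 xs \<in> {1..msgs n R0} \<and> phiX xs \<in> {1..msgs n RX}) \<and>
     (\<forall>ys m. length ys = n \<and> m \<in> {1..msgs n R0} \<longrightarrow> phiY ys m \<in> {1..msgs n RY})"

text \<open>Average distortion (1/n) sum_j E d(f(X_j,Y_j), (Fhat)_j), where (X_j,Y_j) are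
  i.i.d. with law P and Fhat is computed from the whole blocks (X^n, Y^n).\<close>
definition avg_dist ::
  "('x \<times> 'y) pmf \<Rightarrow> nat \<Rightarrow> ('x \<Rightarrow> 'y \<Rightarrow> 'f) \<Rightarrow> ('f \<Rightarrow> 'f \<Rightarrow> real)
     \<Rightarrow> ('x list \<Rightarrow> 'y list \<Rightarrow> nat \<Rightarrow> 'f) \<Rightarrow> real" where
  "avg_dist P n f d Fhat =
     (1 / real n) * (\<Sum>j<n. \<Sum>zs\<in>blocks (set_pmf P) n.
        (\<Prod>k<n. pmf P (zs ! k)) *
        d (f (fst (zs ! j)) (snd (zs ! j))) (Fhat (map fst zs) (map snd zs) j))"

text \<open>Decoders psi_i map the two messages to a sequence in F_i^n (index j < n).\<close>
definition achievable ::
  "('x \<times> 'y) pmf \<Rightarrow> ('x \<Rightarrow> 'y \<Rightarrow> 'f1) \<Rightarrow> ('x \<Rightarrow> 'y \<Rightarrow> 'f2)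
     \<Rightarrow> ('f1 \<Rightarrow> 'f1 \<Rightarrow> real) \<Rightarrow> ('f2 \<Rightarrow> 'f2 \<Rightarrow> real)
     \<Rightarrow> real \<Rightarrow> real \<Rightarrow> real \<Rightarrow> real \<Rightarrow> real \<Rightarrow> bool" where
  "achievable P f1 f2 d1 d2 R0 RX RY D1 D2 \<longleftrightarrow>
     (\<forall>\<epsilon>>0. \<exists>N. \<forall>n\<ge>N. \<exists>(phi0 :: 'x list \<Rightarrow> nat) (phiX :: 'x list \<Rightarrow> nat)
        (phiY :: 'y list \<Rightarrow> nat \<Rightarrow> nat) (psi1 :: nat \<Rightarrow> nat \<Rightarrow> nat \<Rightarrow> 'f1)
        (psi2 :: nat \<Rightarrow> nat \<Rightarrow> nat \<Rightarrow> 'f2).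
        is_code n R0 RX RY phi0 phiX phiY \<and>
        avg_dist P n f1 d1 (\<lambda>xs ys. psi1 (phiX xs) (phiY ys (phi0 xs))) \<le> D1 + \<epsilon> \<and>
        avg_dist P n f2 d2 (\<lambda>xs ys. psi2 (phiX xs) (phiY ys (phi0 xs))) \<le> D2 + \<epsilon>)"

definition hamming :: "'a \<Rightarrow> 'a \<Rightarrow> real" where
  "hamming a b = (if a \<noteq> b then 1 else 0)"

text \<open>The example source: X = (X1,X2), X1,Y uniform on {1,2,3}, X2 ~ Bern(p)
  (X2 = 1 encoded as True), mutually independent.\<close>
definition ex_src :: "real \<Rightarrow> ((nat \<times> bool) \<times> nat) pmf" where
  "ex_src p = pair_pmf (pair_pmf (pmf_of_set {1,2,3}) (bernoulli_pmf p)) (pmf_of_set {1,2,3})"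

definition ex_f1 :: "nat \<times> bool \<Rightarrow> nat \<Rightarrow> bool" where
  "ex_f1 x y = (fst x = y)"

definition ex_f2 :: "nat \<times> bool \<Rightarrow> nat \<Rightarrow> bool" where
  "ex_f2 x y = snd x"

end

theory Submission
  imports Defs "HOL-Real_Asymp.Real_Asymp"
begin


definition Eb :: "('a \<Rightarrow> real) list \<Rightarrow> 'a set \<Rightarrow> ('a list \<Rightarrow> real) \<Rightarrow> real" where
  "Eb qs A F = (\<Sum>zs\<in>blocks A (length qs). (\<Prod>k<length qs. (qs!k) (zs!k)) * F zs)"

lemma blocks_0: "blocks A 0 = {[]}"
  by (auto simp: blocks_def)

lemma blocks_Suc: "blocks A (Suc n) = (\<lambda>(z,zs). z#zs) ` (A \<times> blocks A n)"
proof -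
  have "\<And>xs. xs \<in> blocks A (Suc n) \<Longrightarrow> xs \<in> (\<lambda>(z,zs). z#zs) ` (A \<times> blocks A n)"
  proof -
    fix xs assume "xs \<in> blocks A (Suc n)"
    then obtain z zs where "xs = z#zs" "z \<in> A" "zs \<in> blocks A n"
      by (cases xs) (auto simp: blocks_def)
    then show "xs \<in> (\<lambda>(z,zs). z#zs) ` (A \<times> blocks A n)" by force
  qed
  then show ?thesis by (auto simp: blocks_def)
qed

lemma finite_blocks: "finite A \<Longrightarrow> finite (blocks A n)"
  by (induction n) (auto simp: blocks_0 blocks_Suc)

lemma Eb_Nil: "Eb [] A F = F []"
  by (simp add: Eb_def blocks_0)

lemma Eb_Cons:
  assumes "finite A"
  shows "Eb (q#qs) A F = (\<Sum>z\<in>A. q z * Eb qs A (\<lambda>zs. F (z#zs)))"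
proof -
  have inj: "inj_on (\<lambda>(z,zs). z#zs) (A \<times> blocks A (length qs))"
    by (auto simp: inj_on_def)
  have "Eb (q#qs) A F = (\<Sum>(z,zs)\<in>A \<times> blocks A (length qs).
          (\<Prod>k<Suc (length qs). ((q#qs)!k) ((z#zs)!k)) * F (z#zs))"
    unfolding Eb_def length_Cons blocks_Suc sum.reindex[OF inj] comp_def
    by (simp only: case_prod_unfold)
  also have "\<dots> = (\<Sum>(z,zs)\<in>A \<times> blocks A (length qs).
          q z * ((\<Prod>k<length qs. (qs!k) (zs!k)) * F (z#zs)))"
    by (intro sum.cong refl) (auto simp: prod.lessThan_Suc_shift simp del: prod.lessThan_Suc)
  also have "\<dots> = (\<Sum>z\<in>A. q z * Eb qs A (\<lambda>zs. F (z#zs)))"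
    unfolding Eb_def sum.cartesian_product[symmetric]
    by (simp add: sum_distrib_left)
  finally show ?thesis .
qed

lemma Eb_add: "Eb qs A (\<lambda>zs. F zs + G zs) = Eb qs A F + Eb qs A G"
  by (simp add: Eb_def distrib_left sum.distrib)

lemma Eb_cmult: "Eb qs A (\<lambda>zs. c * F zs) = c * Eb qs A F"
  by (simp add: Eb_def sum_distrib_left mult_ac)

lemma Eb_diff: "Eb qs A (\<lambda>zs. F zs - G zs) = Eb qs A F - Eb qs A G"
  by (simp add: Eb_def right_diff_distrib sum_subtractf)

lemma Eb_cong: "(\<And>zs. zs \<in> blocks A (length qs) \<Longrightarrow> F zs = G zs) \<Longrightarrow> Eb qs A F = Eb qs A G"
  by (simp add: Eb_def)

definition good_ws :: "('a \<Rightarrow> real) list \<Rightarrow> 'a set \<Rightarrow> bool" where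
  "good_ws qs A \<longleftrightarrow> (\<forall>q\<in>set qs. (\<forall>a. q a \<ge> 0) \<and> (\<Sum>a\<in>A. q a) = 1)"

lemma Eb_mono:
  assumes "\<forall>q\<in>set qs. \<forall>a. q a \<ge> 0" "\<And>zs. zs \<in> blocks A (length qs) \<Longrightarrow> F zs \<le> G zs"
  shows "Eb qs A F \<le> Eb qs A G"
  unfolding Eb_def
  by (intro sum_mono mult_left_mono prod_nonneg) (use assms in auto)

lemma Eb_const:
  assumes "finite A" "good_ws qs A"
  shows "Eb qs A (\<lambda>_. c) = c"
  using assms(2)
proof (induction qs arbitrary: c)
  case Nil then show ?case by (simp add: Eb_Nil)
next
  case (Cons q qs)
  then have "good_ws qs A" "(\<Sum>a\<in>A. q a) = 1" by (auto simp: good_ws_def)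
  with Cons show ?case by (simp add: Eb_Cons[OF assms(1)] sum_distrib_right[symmetric])
qed

definition Ssum :: "('a \<Rightarrow> real) list \<Rightarrow> 'a list \<Rightarrow> real" where
  "Ssum gs zs = (\<Sum>j<length gs. (gs!j) (zs!j))"

definition meanS :: "('a \<Rightarrow> real) list \<Rightarrow> ('a \<Rightarrow> real) list \<Rightarrow> 'a set \<Rightarrow> real" where
  "meanS gs qs A = (\<Sum>j<length gs. \<Sum>a\<in>A. (qs!j) a * (gs!j) a)"

lemma Ssum_Cons: "Ssum (g#gs) (z#zs) = g z + Ssum gs zs"
  by (simp add: Ssum_def sum.lessThan_Suc_shift del: sum.lessThan_Suc)

lemma meanS_Cons: "meanS (g#gs) (q#qs) A = (\<Sum>a\<in>A. q a * g a) + meanS gs qs A"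
  by (simp add: meanS_def sum.lessThan_Suc_shift del: sum.lessThan_Suc)

lemma Eb_Ssum:
  assumes "finite A" "good_ws qs A" "length gs = length qs"
  shows "Eb qs A (Ssum gs) = meanS gs qs A"
  using assms(3,2)
proof (induction gs qs rule: list_induct2)
  case Nil then show ?case by (simp add: Eb_Nil Ssum_def meanS_def)
next
  case (Cons g gs q qs)
  then have gw: "good_ws qs A" by (auto simp: good_ws_def)
  have "Eb (q#qs) A (Ssum (g#gs)) = (\<Sum>z\<in>A. q z * Eb qs A (\<lambda>zs. g z + Ssum gs zs))"
    by (simp add: Eb_Cons[OF assms(1)] Ssum_Cons)
  also have "\<dots> = (\<Sum>z\<in>A. q z * (g z + meanS gs qs A))"
    by (simp add: Eb_add Eb_const[OF assms(1) gw] Cons.IH[OF gw])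
  also have "\<dots> = (\<Sum>a\<in>A. q a * g a) + meanS gs qs A"
    using Cons.prems by (simp add: distrib_left sum.distrib sum_distrib_right[symmetric] good_ws_def)
  finally show ?case by (simp add: meanS_Cons)
qed

lemma Eb_var:
  assumes "finite A" "good_ws qs A" "length gs = length qs"
    and "\<forall>g\<in>set gs. \<forall>a\<in>A. \<bar>g a\<bar> \<le> G"
  shows "Eb qs A (\<lambda>zs. (Ssum gs zs - meanS gs qs A)^2) \<le> real (length qs) * (4 * G^2)"
  using assms(3,2,4)
proof (induction gs qs rule: list_induct2)
  case Nil then show ?case by (simp add: Eb_Nil Ssum_def meanS_def)
next
  case (Cons g gs q qs)
  then have gw: "good_ws qs A" and qn: "\<forall>a. q a \<ge> 0" and q1: "(\<Sum>a\<in>A. q a) = 1"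
    and gb: "\<forall>a\<in>A. \<bar>g a\<bar> \<le> G" and gsb: "\<forall>g\<in>set gs. \<forall>a\<in>A. \<bar>g a\<bar> \<le> G"
    by (auto simp: good_ws_def)
  define m0 where "m0 = (\<Sum>a\<in>A. q a * g a)"
  define m' where "m' = meanS gs qs A"
  define V where "V = Eb qs A (\<lambda>zs. (Ssum gs zs - m')^2)"
  have IH: "V \<le> real (length qs) * (4 * G^2)" using Cons.IH[OF gw gsb] by (simp add: V_def m'_def)
  have m0b: "\<bar>m0\<bar> \<le> G"
  proof -
    have "\<bar>m0\<bar> \<le> (\<Sum>a\<in>A. \<bar>q a * g a\<bar>)" unfolding m0_def by (rule sum_abs)
    also have "\<dots> \<le> (\<Sum>a\<in>A. q a * G)"
      using qn gb by (intro sum_mono) (auto simp: abs_mult intro: mult_left_mono)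
    also have "\<dots> = G" using q1 by (simp add: sum_distrib_right[symmetric])
    finally show ?thesis .
  qed
  have E0: "Eb qs A (\<lambda>zs. Ssum gs zs - m') = 0"
    by (simp add: Eb_diff Eb_Ssum[OF assms(1) gw Cons.hyps] Eb_const[OF assms(1) gw] m'_def)
  have inner: "\<And>z. Eb qs A (\<lambda>zs. (g z + Ssum gs zs - (m0 + m'))^2) = (g z - m0)^2 + V"
  proof -
    fix z
    have "\<And>zs. (g z + Ssum gs zs - (m0 + m'))^2 =
       (g z - m0)^2 + (2 * (g z - m0)) * (Ssum gs zs - m') + (Ssum gs zs - m')^2"
      by (simp add: power2_eq_square algebra_simps)
    then show "Eb qs A (\<lambda>zs. (g z + Ssum gs zs - (m0 + m'))^2) = (g z - m0)^2 + V"
      by (simp add: Eb_add Eb_cmult E0 Eb_const[OF assms(1) gw] V_def)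
  qed
  have "Eb (q#qs) A (\<lambda>zs. (Ssum (g#gs) zs - meanS (g#gs) (q#qs) A)^2)
      = (\<Sum>z\<in>A. q z * ((g z - m0)^2 + V))"
    by (simp add: Eb_Cons[OF assms(1)] Ssum_Cons meanS_Cons inner flip: m0_def m'_def)
  also have "\<dots> \<le> (\<Sum>z\<in>A. q z * (4 * G^2 + V))"
  proof (intro sum_mono mult_left_mono)
    fix z assume "z \<in> A"
    then have "\<bar>g z - m0\<bar> \<le> 2 * G" using gb m0b by auto
    then have "(g z - m0)^2 \<le> (2*G)^2"
      by (metis abs_ge_zero power2_abs power_mono)
    then show "(g z - m0)^2 + V \<le> 4 * G^2 + V" by (simp add: power_mult_distrib)
  qed (use qn in auto)
  also have "\<dots> = 4 * G^2 + V" using q1 by (simp add: sum_distrib_right[symmetric])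
  also have "\<dots> \<le> real (length (q#qs)) * (4 * G^2)" using IH by (simp add: algebra_simps)
  finally show ?case .
qed

lemma Eb_cheb:
  assumes "finite A" "good_ws qs A" "length gs = length qs"
    and "\<forall>g\<in>set gs. \<forall>a\<in>A. \<bar>g a\<bar> \<le> G" and t: "t > 0"
  shows "Eb qs A (\<lambda>zs. if t \<le> \<bar>Ssum gs zs - meanS gs qs A\<bar> then 1 else 0)
           \<le> real (length qs) * (4 * G^2) / t^2"
proof -
  have "Eb qs A (\<lambda>zs. if t \<le> \<bar>Ssum gs zs - meanS gs qs A\<bar> then 1 else 0)
      \<le> Eb qs A (\<lambda>zs. (1/t^2) * (Ssum gs zs - meanS gs qs A)^2)"
  proof (intro Eb_mono)
    show "\<forall>q\<in>set qs. \<forall>a. 0 \<le> q a" using assms(2) by (auto simp: good_ws_def)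
  next
    fix zs
    show "(if t \<le> \<bar>Ssum gs zs - meanS gs qs A\<bar> then 1 else 0)
          \<le> (1/t^2) * (Ssum gs zs - meanS gs qs A)^2"
    proof (cases "t \<le> \<bar>Ssum gs zs - meanS gs qs A\<bar>")
      case True
      then have "t^2 \<le> (Ssum gs zs - meanS gs qs A)^2"
        using t by (metis less_imp_le power2_abs power_mono)
      then show ?thesis using True t by (simp add: field_simps)
    qed simp
  qed
  also have "\<dots> \<le> (1/t^2) * (real (length qs) * (4 * G^2))"
    unfolding Eb_cmult using Eb_var[OF assms(1-4)] t by (intro mult_left_mono) auto
  finally show ?thesis by simp
qed




lemma sum_indic_card: "finite U \<Longrightarrow> (\<Sum>x\<in>U. (if P x then 1 else 0::real)) = real (card {x\<in>U. P x})"
  by (simp add: sum.inter_filter[symmetric])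

lemma greedy_cover:
  fixes cov :: "'x \<Rightarrow> 'c \<Rightarrow> bool" and q :: "'c \<Rightarrow> real"
  assumes B: "finite B" and qn: "\<forall>c. q c \<ge> 0" and q1: "(\<Sum>c\<in>B. q c) = 1"
    and r0: "0 \<le> \<rho>" and r1: "\<rho> \<le> 1"
  shows "finite U \<Longrightarrow> (\<forall>x\<in>U. (\<Sum>c\<in>B. q c * (if cov x c then 1 else 0)) \<ge> \<rho>) \<Longrightarrow>
         real (card U) * (1-\<rho>)^m < 1 \<Longrightarrow> \<exists>C \<subseteq> B. card C \<le> m \<and> (\<forall>x\<in>U. \<exists>c\<in>C. cov x c)"
proof (induction m arbitrary: U)
  case 0
  then have "U = {}" by simp
  then show ?case by auto
next
  case (Suc m)
  show ?case
  proof (cases "U = {}")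
    case True then show ?thesis by auto
  next
    case False
    have Bne: "B \<noteq> {}" using q1 by auto
    define cnt where "cnt c = card {x\<in>U. cov x c}" for c
    define K where "K = Max (cnt ` B)"
    have "K \<in> cnt ` B" unfolding K_def using B Bne by (intro Max_in) auto
    then obtain c where cB: "c \<in> B" and cK: "cnt c = K" by auto
    have leK: "\<And>c'. c' \<in> B \<Longrightarrow> cnt c' \<le> K" unfolding K_def using B by auto
    have "real (card U) * \<rho> \<le> (\<Sum>x\<in>U. \<Sum>c\<in>B. q c * (if cov x c then 1 else 0))"
    proof -
      have "(\<Sum>x\<in>U. \<rho>) \<le> (\<Sum>x\<in>U. \<Sum>c\<in>B. q c * (if cov x c then 1 else 0))"
        using Suc.prems(2) by (intro sum_mono) auto
      then show ?thesis by (simp add: mult.commute)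
    qed
    also have "\<dots> = (\<Sum>c\<in>B. q c * real (cnt c))"
      unfolding cnt_def using Suc.prems(1)
      by (subst sum.swap) (simp add: sum_distrib_left[symmetric] sum_indic_card)
    also have "\<dots> \<le> (\<Sum>c\<in>B. q c * real K)"
      using leK qn by (intro sum_mono mult_left_mono) auto
    also have "\<dots> = real K" using q1 by (simp add: sum_distrib_right[symmetric])
    finally have KU: "real (card U) * \<rho> \<le> real K" .
    define U' where "U' = U - {x. cov x c}"
    have fU': "finite U'" using Suc.prems(1) by (simp add: U'_def)
    have e1: "U = U' \<union> {x\<in>U. cov x c}" and e2: "U' \<inter> {x\<in>U. cov x c} = {}"
      by (auto simp: U'_def)
    have "card U = card U' + cnt c"
      unfolding cnt_def using Suc.prems(1) fU'
      by (subst e1, subst card_Un_disjoint[OF _ _ e2]) auto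
    then have cU': "real (card U') \<le> (1-\<rho>) * real (card U)" using KU cK by (simp add: algebra_simps)
    have "real (card U') * (1-\<rho>)^m \<le> (1-\<rho>) * real (card U) * (1-\<rho>)^m"
      using cU' r1 by (intro mult_right_mono) auto
    also have "\<dots> < 1" using Suc.prems(3) by (simp add: mult_ac)
    finally have lt: "real (card U') * (1-\<rho>)^m < 1" .
    have p2: "\<forall>x\<in>U'. \<rho> \<le> (\<Sum>c\<in>B. q c * (if cov x c then 1 else 0))"
      using Suc.prems(2) by (simp add: U'_def)
    obtain C where C: "C \<subseteq> B" "card C \<le> m" "\<forall>x\<in>U'. \<exists>c\<in>C. cov x c"
      using Suc.IH[OF fU' p2 lt] by blast
    have "finite C" using C(1) B by (rule finite_subset)
    then have "card (insert c C) \<le> Suc m" using C(2) by (simp add: card_insert_if)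
    moreover have "\<forall>x\<in>U. \<exists>c'\<in>insert c C. cov x c'" using C(3) unfolding U'_def by auto
    ultimately show ?thesis using C(1) cB by (intro exI[of _ "insert c C"]) auto
  qed
qed




locale bsrc =
  fixes p D :: real
  assumes D0: "0 \<le> D" and Dp: "D < p" and p2: "p \<le> 1/2"
begin

definition "w = (p - D) / (1 - 2*D)"
definition "px b = (if b then p else 1 - p)"
definition "Q b = (if b then w else 1 - w)"
definition "PZ z = (if z then D else 1 - D)"
definition "W x c = Q c * PZ (x \<noteq> c) / px x"
definition "L x c = log 2 (PZ (x \<noteq> c)) - log 2 (px x)"
definition "Iv x = (\<Sum>c\<in>UNIV. W x c * L x c)"
definition "Dv x = (\<Sum>c\<in>UNIV. W x c * hamming x c)"

lemma D2: "1 - 2*D > 0" using D0 Dp p2 by linarith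
lemma p_w: "p = w*(1-D) + (1-w)*D"
proof -
  have h: "w * (1 - 2*D) = p - D" using D2 unfolding w_def by simp
  have "w*(1-D)+(1-w)*D = w*(1-2*D) + D" by (simp add: algebra_simps)
  then show ?thesis using h by simp
qed
lemma w_pos: "0 < w" using D2 Dp by (simp add: w_def)
lemma w_le: "w \<le> p"
proof -
  have "p - D \<le> p * (1 - 2*D)" using D0 p2 by (simp add: algebra_simps) (metis mult_left_mono mult.commute  mult_1 p2 D0 less_eq_real_def mult_right_mono  order_trans linorder_not_le) 
  then show ?thesis using D2 by (simp add: w_def divide_le_eq)
qed
lemma p_pos: "0 < p" using D0 Dp by linarith
lemma w_lt1: "w < 1" using w_le p2 by linarith

lemma px_pos: "px b > 0" using p_pos p2 by (auto simp: px_def)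
lemma Q_pos: "Q b > 0" using w_pos w_lt1 by (auto simp: Q_def)
lemma PZ_nonneg: "PZ z \<ge> 0" using D0 D2 by (auto simp: PZ_def)
lemma W_nonneg: "W x c \<ge> 0"
  using Q_pos PZ_nonneg px_pos by (simp add: W_def less_imp_le)
lemma sum_UNIV_bool: "(\<Sum>c\<in>(UNIV::bool set). f c) = f True + f False"
  by (simp add: UNIV_bool add.commute)
lemma W_sum: "(\<Sum>c\<in>UNIV. W x c) = 1"
proof -
  have "(\<Sum>c\<in>UNIV. W x c) = (Q True * PZ (x \<noteq> True) + Q False * PZ (x \<noteq> False)) / px x"
    by (simp add: sum_UNIV_bool W_def add_divide_distrib)
  also have "\<dots> = 1"
    using px_pos[of x] p_w by (cases x) (auto simp: Q_def PZ_def px_def field_simps)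
  finally show ?thesis .
qed
lemma px_sum: "(\<Sum>c\<in>UNIV. px c) = 1" by (simp add: sum_UNIV_bool px_def)
lemma Q_sum: "(\<Sum>c\<in>UNIV. Q c) = 1" by (simp add: sum_UNIV_bool Q_def)

lemma Dv_mean: "p * Dv True + (1-p) * Dv False = D"
proof -
  have "p * Dv True + (1-p) * Dv False = Q False * D + Q True * D"
    using px_pos[of True] px_pos[of False]
    by (simp add: Dv_def sum_UNIV_bool W_def hamming_def PZ_def px_def)
  then show ?thesis by (simp add: Q_def algebra_simps)
qed

lemma Iv_mean: "p * Iv True + (1-p) * Iv False = Hb p - Hb D"
proof -
  have gen: "px x * Iv x = (\<Sum>c\<in>UNIV. Q c * PZ (x \<noteq> c) * L x c)" for x
    unfolding Iv_def sum_distrib_left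
    by (intro sum.cong refl) (use px_pos[of x] in \<open>simp add: W_def\<close>)
  have pT: "p * Iv True = Q True * (1-D) * (log 2 (1-D) - log 2 p) + Q False * D * (log 2 D - log 2 p)"
    using gen[of True] by (simp add: sum_UNIV_bool L_def PZ_def px_def)
  have pF: "(1-p) * Iv False = Q True * D * (log 2 D - log 2 (1-p)) + Q False * (1-D) * (log 2 (1-D) - log 2 (1-p))"
    using gen[of False] by (simp add: sum_UNIV_bool L_def PZ_def px_def)
  have "p * Iv True + (1-p) * Iv False
      = (1-D) * log 2 (1-D) + D * log 2 D - (w*(1-D)+(1-w)*D) * log 2 p - (1 - (w*(1-D)+(1-w)*D)) * log 2 (1-p)"
    unfolding pT pF by (simp add: Q_def algebra_simps)
  also have "\<dots> = Hb p - Hb D" by (simp only: p_w[symmetric]) (simp add: Hb_def algebra_simps)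
  finally show ?thesis .
qed

lemma change: "Q c \<ge> W x c * 2 powr (- L x c)"
proof (cases "PZ (x \<noteq> c) = 0")
  case True then show ?thesis using Q_pos by (simp add: W_def less_imp_le)
next
  case False
  then have PZp: "PZ (x \<noteq> c) > 0" using PZ_nonneg by (simp add: order_less_le)
  have "2 powr (- L x c) = px x / PZ (x \<noteq> c)"
    using PZp px_pos[of x] by (simp add: L_def powr_diff powr_minus)
  then show ?thesis using PZp px_pos[of x] by (simp add: W_def)
qed

end



definition hdist :: "bool list \<Rightarrow> bool list \<Rightarrow> real" where
  "hdist x c = (\<Sum>j<length x. hamming (x!j) (c!j))"

context bsrc begin

definition "GL = \<bar>L True True\<bar> + \<bar>L True False\<bar> + \<bar>L False True\<bar> + \<bar>L False False\<bar>"
lemma GL: "\<bar>L a b\<bar> \<le> GL"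
  by (cases a; cases b) (auto simp: GL_def)

definition "SL x c = (\<Sum>j<length x. L (x!j) (c!j))"

lemma good_W: "good_ws (map W x) UNIV"
  using W_nonneg W_sum by (auto simp: good_ws_def)

lemma Ssum_hd: "Ssum (map hamming x) c = hdist x c" by (simp add: Ssum_def hdist_def)
lemma Ssum_SL: "Ssum (map L x) c = SL x c" by (simp add: Ssum_def SL_def)
lemma mean_hd: "meanS (map hamming x) (map W x) UNIV = (\<Sum>j<length x. Dv (x!j))"
  by (simp add: meanS_def Dv_def)
lemma mean_SL: "meanS (map L x) (map W x) UNIV = (\<Sum>j<length x. Iv (x!j))"
  by (simp add: meanS_def Iv_def)

lemma cheb_hd:
  assumes "t > 0"
  shows "Eb (map W x) UNIV (\<lambda>c. if t \<le> \<bar>hdist x c - (\<Sum>j<length x. Dv (x!j))\<bar> then 1 else 0)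
          \<le> real (length x) * 4 / t^2"
  using Eb_cheb[of UNIV "map W x" "map hamming x" 1 t] assms good_W
  by (simp add: Ssum_hd mean_hd hamming_def)

lemma cheb_SL:
  assumes "t > 0"
  shows "Eb (map W x) UNIV (\<lambda>c. if t \<le> \<bar>SL x c - (\<Sum>j<length x. Iv (x!j))\<bar> then 1 else 0)
          \<le> real (length x) * (4 * GL^2) / t^2"
  using Eb_cheb[of UNIV "map W x" "map L x" GL t] assms good_W GL
  by (simp add: Ssum_SL mean_SL)

lemma Eb_ones: "good_ws qs A \<Longrightarrow> finite A \<Longrightarrow> Eb qs A (\<lambda>_. 1) = 1"
  using Eb_const by blast

lemma cover_prob:
  assumes n: "length x = n" "n > 0" and d: "\<delta> > 0"
    and tD: "(\<Sum>j<n. Dv (x!j)) \<le> n * (D + \<delta>)"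
    and tI: "(\<Sum>j<n. Iv (x!j)) \<le> n * (Hb p - Hb D + \<delta>)"
    and N1: "4 / (n * \<delta>^2) \<le> 1/4" and N2: "4 * GL^2 / (n * \<delta>^2) \<le> 1/4"
  shows "Eb (replicate n Q) UNIV (\<lambda>c. if hdist x c \<le> n * (D + 2*\<delta>) then 1 else 0)
           \<ge> 2 powr (- (n * (Hb p - Hb D + 2*\<delta>))) / 2"
proof -
  define I where "I = Hb p - Hb D"
  define good where "good c \<longleftrightarrow> hdist x c \<le> n * (D + 2*\<delta>) \<and> SL x c \<le> n * (I + 2*\<delta>)" for c
  define t where "t = n * \<delta>"
  have t: "t > 0" using n d by (simp add: t_def)
  define b1 where "b1 = (\<lambda>c. if t \<le> \<bar>hdist x c - (\<Sum>j<length x. Dv (x!j))\<bar> then 1 else 0::real)"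
  define b2 where "b2 = (\<lambda>c. if t \<le> \<bar>SL x c - (\<Sum>j<length x. Iv (x!j))\<bar> then 1 else 0::real)"
  have pt: "(if good c then 1 else 0) \<ge> 1 - b1 c - b2 c" for c
  proof (cases "good c")
    case False
    then have "hdist x c > n * (D + 2*\<delta>) \<or> SL x c > n * (I + 2*\<delta>)" unfolding good_def by auto
    then have "b1 c = 1 \<or> b2 c = 1"
      using tD tI n unfolding b1_def b2_def t_def I_def by (auto simp: algebra_simps)
    then show ?thesis unfolding b1_def b2_def by auto
  qed (auto simp: b1_def b2_def)
  have e1: "Eb (map W x) UNIV b1 \<le> 1/4"
  proof -
    have "Eb (map W x) UNIV b1 \<le> real n * 4 / t^2" using cheb_hd[OF t, of x] n by (simp add: b1_def)
    also have "\<dots> = 4 / (n * \<delta>^2)" using n by (simp add: t_def power2_eq_square)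
    finally show ?thesis using N1 by simp
  qed
  have e2: "Eb (map W x) UNIV b2 \<le> 1/4"
  proof -
    have "Eb (map W x) UNIV b2 \<le> real n * (4 * GL^2) / t^2" using cheb_SL[OF t, of x] n by (simp add: b2_def)
    also have "\<dots> = 4 * GL^2 / (n * \<delta>^2)" using n by (simp add: t_def power2_eq_square)
    finally show ?thesis using N2 by simp
  qed
  have "Eb (map W x) UNIV (\<lambda>c. 1 - b1 c - b2 c) \<le> Eb (map W x) UNIV (\<lambda>c. if good c then 1 else 0)"
    using pt good_W W_nonneg by (intro Eb_mono) (auto simp: good_ws_def)
  moreover have "Eb (map W x) UNIV (\<lambda>c. 1 - b1 c - b2 c) = 1 - Eb (map W x) UNIV b1 - Eb (map W x) UNIV b2"
    by (simp add: Eb_diff Eb_ones[OF good_W])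
  ultimately have half: "Eb (map W x) UNIV (\<lambda>c. if good c then 1 else 0) \<ge> 1/2" using e1 e2 by simp
  have prodb: "(\<Prod>k<n. Q (c!k)) \<ge> (\<Prod>k<n. W (x!k) (c!k)) * 2 powr (- SL x c)" for c
  proof -
    have "(\<Prod>k<n. W (x!k) (c!k)) * 2 powr (- SL x c) = (\<Prod>k<n. W (x!k) (c!k) * 2 powr (- L (x!k) (c!k)))"
      by (simp add: SL_def n powr_sum prod.distrib sum_negf[symmetric])
    also have "\<dots> \<le> (\<Prod>k<n. Q (c!k))"
      by (intro prod_mono) (auto simp: change W_nonneg)
    finally show ?thesis .
  qed
  have "2 powr (- (n * (I + 2*\<delta>))) / 2 \<le> 2 powr (- (n * (I + 2*\<delta>))) * Eb (map W x) UNIV (\<lambda>c. if good c then 1 else 0)"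
    using half by simp
  also have "\<dots> = (\<Sum>c\<in>blocks UNIV n. (\<Prod>k<n. W (x!k) (c!k)) * (if good c then 2 powr (- (n * (I + 2*\<delta>))) else 0))"
  proof -
    have pm: "(\<Prod>k<length (map W x). (map W x ! k) (c ! k)) = (\<Prod>k<n. W (x!k) (c!k))" for c
      using n by (intro prod.cong) auto
    show ?thesis
      unfolding Eb_def sum_distrib_left pm using n by (intro sum.cong refl) (auto simp: mult_ac)
  qed
  also have "\<dots> \<le> (\<Sum>c\<in>blocks UNIV n. (\<Prod>k<n. Q (c!k)) * (if hdist x c \<le> n * (D + 2*\<delta>) then 1 else 0))"
  proof (intro sum_mono)
    fix c
    show "(\<Prod>k<n. W (x!k) (c!k)) * (if good c then 2 powr (- (n * (I + 2*\<delta>))) else 0)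
          \<le> (\<Prod>k<n. Q (c!k)) * (if hdist x c \<le> n * (D + 2*\<delta>) then 1 else 0)"
    proof (cases "good c")
      case True
      then have "2 powr (- (n * (I + 2*\<delta>))) \<le> 2 powr (- SL x c)" unfolding good_def by simp
      then have "(\<Prod>k<n. W (x!k) (c!k)) * 2 powr (- (n * (I + 2*\<delta>))) \<le> (\<Prod>k<n. W (x!k) (c!k)) * 2 powr (- SL x c)"
        by (intro mult_left_mono prod_nonneg) (auto simp: W_nonneg)
      then show ?thesis using True prodb[of c] unfolding good_def by simp
    next
      case False
      then show ?thesis using Q_pos by (simp add: prod_nonneg less_imp_le)
    qed
  qed
  also have "\<dots> = Eb (replicate n Q) UNIV (\<lambda>c. if hdist x c \<le> n * (D + 2*\<delta>) then 1 else 0)"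
    by (simp add: Eb_def)
  finally show ?thesis by (simp add: I_def)
qed

end



lemma ev_poly_exp:
  fixes c :: real assumes "c > 0"
  shows "\<forall>\<^sub>F n in sequentially. 4 * real n + 7 \<le> 2 powr (real n * c)"
  using assms by real_asymp

lemma ev_inv:
  fixes c b d :: real assumes "d > 0" "b > 0"
  shows "\<forall>\<^sub>F n in sequentially. c / (real n * b) \<le> d"
proof -
  obtain N :: nat where N: "real N \<ge> c / (b * d)" using real_arch_simple by blast
  have "c / (real n * b) \<le> d" if "n \<ge> max N 1" for n
  proof -
    have np: "real n > 0" using that by auto
    have "c / (b*d) \<le> real n" using N that by linarith
    then have "c \<le> real n * (b * d)" using assms by (simp add: divide_le_eq mult.commute)
    then show ?thesis using np assms by (simp add: divide_le_eq mult_ac)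
  qed
  then show ?thesis unfolding eventually_sequentially by blast
qed

lemma Hb_nonneg: "0 \<le> q \<Longrightarrow> q \<le> 1 \<Longrightarrow> Hb q \<ge> 0"
proof -
  assume q: "0 \<le> q" "q \<le> 1"
  have "q * log 2 q \<le> 0"
    using q by (cases "q = 0") (auto intro!: mult_nonneg_nonpos simp: log_le_zero_cancel_iff)
  moreover have "(1-q) * log 2 (1-q) \<le> 0"
    using q by (cases "q = 1") (auto intro!: mult_nonneg_nonpos simp: log_le_zero_cancel_iff)
  ultimately show ?thesis by (simp add: Hb_def)
qed

lemma Hb_deriv:
  assumes "0 < x" "x < 1"
  shows "(Hb has_real_derivative (log 2 (1-x) - log 2 x)) (at x)"
proof -
  have eq: "Hb = (\<lambda>y. (- y * ln y - (1 - y) * ln (1 - y)) / ln 2)"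
    by (rule ext) (simp add: Hb_def log_def diff_divide_distrib)
  have d1: "((\<lambda>z. z * ln z) has_real_derivative (ln x + 1)) (at x)"
    using assms by (auto intro!: derivative_eq_intros)
  have d2: "((\<lambda>z. (1 - z) * ln (1 - z)) has_real_derivative (- ln (1-x) - 1)) (at x)"
    using assms by (auto intro!: derivative_eq_intros)
  have d3: "((\<lambda>y. - (y * ln y) - ((1 - y) * ln (1 - y))) has_real_derivative (- (ln x + 1) - (- ln (1-x) - 1))) (at x)"
    by (intro DERIV_diff DERIV_minus d1 d2)
  have d: "((\<lambda>y. - y * ln y - (1 - y) * ln (1 - y)) has_real_derivative (ln (1-x) - ln x)) (at x)"
    using d3 by simp
  have "((\<lambda>y. (- y * ln y - (1 - y) * ln (1 - y)) / ln 2) has_real_derivative (ln (1-x) - ln x) / ln 2) (at x)"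
    by (intro DERIV_cdivide d)
  then show ?thesis unfolding eq by (simp add: log_def diff_divide_distrib)
qed

lemma Hb_mono:
  assumes "0 \<le> D" "D \<le> p" "p \<le> 1/2"
  shows "Hb D \<le> Hb p"
proof (cases "D = 0")
  case True
  then show ?thesis using Hb_nonneg[of p] assms by (simp add: Hb_def)
next
  case False
  then have D: "D > 0" using assms by simp
  show ?thesis
  proof (rule DERIV_nonneg_imp_nondecreasing[OF assms(2)])
    fix x assume x: "D \<le> x" "x \<le> p"
    then have "0 < x" "x < 1" using D assms by auto
    moreover have "log 2 x \<le> log 2 (1-x)" using x D assms by (subst log_le_cancel_iff) auto
    ultimately show "\<exists>y. (Hb has_real_derivative y) (at x) \<and> 0 \<le> y"
      using Hb_deriv by force
  qed
qed




lemma card_blocks: "finite A \<Longrightarrow> card (blocks A n) = card A ^ n"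
proof (induction n)
  case 0 then show ?case by (simp add: blocks_0)
next
  case (Suc n)
  have inj: "inj_on (\<lambda>(z,zs). z#zs) (A \<times> blocks A n)" by (auto simp: inj_on_def)
  show ?case using Suc by (simp add: blocks_Suc card_image[OF inj] card_cartesian_product)
qed

lemma encoding:
  assumes "finite C" "card C \<le> M"
  shows "\<exists>(enc :: 'a \<Rightarrow> nat) dec. \<forall>c\<in>C. enc c \<in> {1..M} \<and> dec (enc c) = c"
proof -
  obtain h where h: "bij_betw h {1..card C} C" using ex_bij_betw_nat_finite_1[OF assms(1)] by blast
  define enc where "enc = inv_into {1..card C} h"
  have "\<forall>c\<in>C. enc c \<in> {1..M} \<and> h (enc c) = c"
  proof
    fix c assume c: "c \<in> C"
    have "enc c \<in> {1..card C}" unfolding enc_def using h c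
      by (metis bij_betw_def inv_into_into)
    moreover have "h (enc c) = c" unfolding enc_def using h c
      by (meson bij_betw_inv_into_right)
    ultimately show "enc c \<in> {1..M} \<and> h (enc c) = c" using assms(2) by auto
  qed
  then show ?thesis by blast
qed

context bsrc begin

lemma Dv_bound: "\<bar>Dv x\<bar> \<le> 1"
proof -
  have "0 \<le> Dv x" unfolding Dv_def by (intro sum_nonneg mult_nonneg_nonneg) (auto simp: W_nonneg hamming_def)
  moreover have "Dv x \<le> (\<Sum>c\<in>UNIV. W x c)" unfolding Dv_def
    by (intro sum_mono) (auto simp: W_nonneg hamming_def)
  ultimately show ?thesis using W_sum by simp
qed

definition "GI = \<bar>Iv True\<bar> + \<bar>Iv False\<bar>"
lemma GI: "\<bar>Iv x\<bar> \<le> GI" by (cases x) (auto simp: GI_def)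

lemma good_px: "good_ws (replicate n px) UNIV"
  using px_pos px_sum by (auto simp: good_ws_def less_imp_le)
lemma good_Q: "good_ws (replicate n Q) UNIV"
  using Q_pos Q_sum by (auto simp: good_ws_def less_imp_le)

lemma typ_D:
  assumes "t > 0"
  shows "Eb (replicate n px) UNIV (\<lambda>x. if t \<le> \<bar>(\<Sum>j<n. Dv (x!j)) - n * D\<bar> then 1 else 0) \<le> real n * 4 / t^2"
proof -
  have m: "meanS (replicate n Dv) (replicate n px) UNIV = n * D"
    using Dv_mean by (simp add: meanS_def sum_UNIV_bool px_def)
  show ?thesis
    using Eb_cheb[of UNIV "replicate n px" "replicate n Dv" 1 t] assms good_px Dv_bound
    by (simp add: m Ssum_def)
qed

lemma typ_I:
  assumes "t > 0"
  shows "Eb (replicate n px) UNIV (\<lambda>x. if t \<le> \<bar>(\<Sum>j<n. Iv (x!j)) - n * (Hb p - Hb D)\<bar> then 1 else 0)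
          \<le> real n * (4 * GI^2) / t^2"
proof -
  have m: "meanS (replicate n Iv) (replicate n px) UNIV = n * (Hb p - Hb D)"
    using Iv_mean by (simp add: meanS_def sum_UNIV_bool px_def)
  show ?thesis
    using Eb_cheb[of UNIV "replicate n px" "replicate n Iv" GI t] assms good_px GI
    by (simp add: m Ssum_def)
qed

lemma hdist_le: "length x = n \<Longrightarrow> hdist x c \<le> n"
proof -
  assume l: "length x = n"
  have "hdist x c \<le> (\<Sum>j<n. 1)" unfolding hdist_def l by (intro sum_mono) (auto simp: hamming_def)
  then show ?thesis by simp
qed

lemma hdist_nonneg: "hdist x c \<ge> 0"
  unfolding hdist_def by (intro sum_nonneg) (auto simp: hamming_def)

end



lemma two_pow_exp: "(2::real)^n * exp (- (real n + 1)) < 1"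
proof -
  have "(2::real) \<le> exp 1" using exp_ge_add_one_self[of 1] by simp
  then have "(2::real)^n \<le> exp 1 ^ n" by (intro power_mono) auto
  also have "\<dots> = exp (real n)" by (simp add: exp_of_nat_mult[symmetric])
  finally have "(2::real)^n * exp (- (real n + 1)) \<le> exp (real n) * exp (- (real n + 1))"
    by (intro mult_right_mono) auto
  also have "\<dots> = exp (-1)" by (simp add: exp_add[symmetric])
  also have "\<dots> < 1" by simp
  finally show ?thesis .
qed

context bsrc begin

lemma lossy:
  assumes R: "R > Hb p - Hb D" and e: "\<epsilon> > 0"
  shows "\<exists>N. \<forall>n\<ge>N. \<exists>(enc::bool list \<Rightarrow> nat) (dec::nat \<Rightarrow> bool list).
     (\<forall>x. length x = n \<longrightarrow> enc x \<in> {1..msgs n R}) \<and>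
     Eb (replicate n px) UNIV (\<lambda>x. hdist x (dec (enc x))) \<le> n * (D + \<epsilon>)"
proof -
  define I where "I = Hb p - Hb D"
  have I0: "I \<ge> 0" using Hb_mono[of D p] D0 Dp p2 by (simp add: I_def)
  define \<delta> where "\<delta> = min (\<epsilon>/4) ((R - I)/4)"
  have d: "\<delta> > 0" using e R by (simp add: \<delta>_def I_def)
  define a where "a = I + 2*\<delta>"
  have a0: "a \<ge> 0" using I0 d by (simp add: a_def)
  have "\<delta> \<le> (R - I)/4" unfolding \<delta>_def by (rule min.cobounded2)
  then have aR: "R - a > 0" using R d by (simp add: a_def I_def)
  have d2: "\<delta>^2 > 0" using d by simp
  have "\<forall>\<^sub>F n in sequentially. 0 < n \<and> 4/(real n*\<delta>^2) \<le> 1/4 \<and> 4*GL^2/(real n*\<delta>^2) \<le> 1/4 \<and>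
          4/(real n*\<delta>^2) \<le> \<epsilon>/8 \<and> 4*GI^2/(real n*\<delta>^2) \<le> \<epsilon>/8 \<and> 4 * real n + 7 \<le> 2 powr (real n * (R - a))"
    using e d2 by (intro eventually_conj eventually_gt_at_top ev_inv ev_poly_exp aR) auto
  then obtain N where N: "\<And>n. n \<ge> N \<Longrightarrow> 0 < n \<and> 4/(real n*\<delta>^2) \<le> 1/4 \<and> 4*GL^2/(real n*\<delta>^2) \<le> 1/4 \<and>
          4/(real n*\<delta>^2) \<le> \<epsilon>/8 \<and> 4*GI^2/(real n*\<delta>^2) \<le> \<epsilon>/8 \<and> 4 * real n + 7 \<le> 2 powr (real n * (R - a))"
    unfolding eventually_sequentially by blast
  show ?thesis
  proof (intro exI[of _ N] allI impI)
    fix n assume "n \<ge> N"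
    note Nn = N[OF this]
    have n0: "n > 0" using Nn by simp
    define U where "U = {x \<in> blocks UNIV n. (\<Sum>j<n. Dv (x!j)) \<le> n*(D+\<delta>) \<and> (\<Sum>j<n. Iv (x!j)) \<le> n*(I+\<delta>)}"
    define cov where "cov x c \<longleftrightarrow> hdist x c \<le> n*(D+2*\<delta>)" for x c
    define \<rho> where "\<rho> = min (2 powr (-(n*a))/2) (1/2)"
    define m where "m = nat \<lceil>(real n+1)/\<rho>\<rceil>"
    have r0: "\<rho> > 0" and r1: "\<rho> \<le> 1" by (auto simp: \<rho>_def)
    define q where "q c = (\<Prod>k<n. Q (c!k))" for c
    have qn: "\<forall>c. q c \<ge> 0" unfolding q_def by (intro allI prod_nonneg) (simp add: less_imp_le Q_pos)
    have q1: "(\<Sum>c\<in>blocks UNIV n. q c) = 1"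
    proof -
      have "Eb (replicate n Q) UNIV (\<lambda>_. 1) = 1" by (rule Eb_const) (simp_all add: good_Q)
      then show ?thesis by (simp add: Eb_def q_def)
    qed
    have fB: "finite (blocks (UNIV::bool set) n)" by (rule finite_blocks) simp
    have covU: "\<forall>x\<in>U. \<rho> \<le> (\<Sum>c\<in>blocks UNIV n. q c * (if cov x c then 1 else 0))"
    proof
      fix x assume x: "x \<in> U"
      then have lx: "length x = n" by (simp add: U_def blocks_def)
      have "2 powr (- (n * (Hb p - Hb D + 2*\<delta>))) / 2 \<le>
            Eb (replicate n Q) UNIV (\<lambda>c. if hdist x c \<le> n * (D + 2*\<delta>) then 1 else 0)"
        using x Nn n0 d by (intro cover_prob[OF lx]) (auto simp: U_def I_def)
      also have "\<dots> = (\<Sum>c\<in>blocks UNIV n. q c * (if cov x c then 1 else 0))"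
        by (simp add: Eb_def q_def cov_def)
      finally show "\<rho> \<le> (\<Sum>c\<in>blocks UNIV n. q c * (if cov x c then 1 else 0))"
        unfolding \<rho>_def a_def I_def by linarith
    qed
    have "0 \<le> (real n+1)/\<rho>" using r0 by simp
    then have c0: "0 \<le> \<lceil>(real n+1)/\<rho>\<rceil>" by linarith
    have mr: "real m = of_int \<lceil>(real n+1)/\<rho>\<rceil>" unfolding m_def by (rule of_nat_nat[OF c0])
    have rm: "\<rho> * real m \<ge> real n + 1"
    proof -
      have "(real n + 1) / \<rho> \<le> real m" unfolding mr by (rule le_of_int_ceiling)
      then show ?thesis using r0 by (simp add: divide_le_eq mult.commute)
    qed
    have cardU: "real (card U) * (1-\<rho>)^m < 1"
    proof -
      have "card U \<le> card (blocks (UNIV::bool set) n)"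
        by (intro card_mono fB) (auto simp: U_def)
      then have cU: "real (card U) \<le> 2^n" by (simp add: card_blocks)
      have "(1-\<rho>)^m \<le> exp (-\<rho>)^m" using r1 exp_minus_ge[of \<rho>] by (intro power_mono) auto
      also have "\<dots> = exp (- (\<rho> * real m))" by (simp add: exp_of_nat_mult[symmetric] mult.commute)
      also have "\<dots> \<le> exp (- (real n + 1))" using rm by simp
      finally have "real (card U) * (1-\<rho>)^m \<le> 2^n * exp (- (real n + 1))"
        using cU r1 by (intro mult_mono) auto
      also have "\<dots> < 1" by (rule two_pow_exp)
      finally show ?thesis .
    qed
    have fU: "finite U" using fB by (auto simp: U_def)
    obtain C where C: "C \<subseteq> blocks UNIV n" "card C \<le> m" "\<forall>x\<in>U. \<exists>c\<in>C. cov x c"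
      using greedy_cover[OF fB qn q1 less_imp_le[OF r0] r1 fU covU cardU] by blast
    define z0 where "z0 = replicate n False"
    define C' where "C' = insert z0 C"
    have fC: "finite C" using C(1) fB by (rule finite_subset)
    have cC': "card C' \<le> m + 1" using C(2) fC by (simp add: C'_def card_insert_if)
    have mb: "real m + 1 \<le> 2 powr (n * R)"
    proof -
      define X where "X = 2 powr (n*a)"
      have X1: "X \<ge> 1" using a0 unfolding X_def by (intro ge_one_powr_ge_zero) auto
      have "1/\<rho> \<le> 2*X + 2"
        unfolding \<rho>_def X_def using r0
        by (auto simp: min_def powr_minus field_simps)
      have "real m \<le> (real n+1)/\<rho> + 1"
        unfolding mr by (rule of_int_ceiling_le_add_one)
      also have "(real n+1)/\<rho> = (real n+1) * (1/\<rho>)" by simp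
      also have "\<dots> \<le> (real n+1) * (2*X+2)" using \<open>1/\<rho> \<le> 2*X + 2\<close> by (intro mult_left_mono) auto
      finally have "real m + 1 \<le> (real n+1)*(2*X+2) + 2" by simp
      also have "\<dots> \<le> (4 * real n + 7) * X" using X1 mult_left_mono[OF X1, of "2*real n + 4"] by (simp add: algebra_simps)
      also have "\<dots> \<le> 2 powr (real n * (R - a)) * X" using Nn X1 by (intro mult_right_mono) auto
      also have "\<dots> = 2 powr (n * R)" unfolding X_def by (simp add: powr_add[symmetric] algebra_simps)
      finally show ?thesis .
    qed
    have cM: "card C' \<le> msgs n R"
    proof -
      have "real (card C') \<le> 2 powr (n*R)" using cC' mb by linarith
      then show ?thesis unfolding msgs_def by (simp add: le_nat_floor)
    qed
    have fC': "finite C'" using fC by (simp add: C'_def)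
    obtain enc dec where ed: "\<forall>c\<in>C'. enc c \<in> {1..msgs n R} \<and> dec (enc c) = c"
      using encoding[OF fC' cM] by blast
    define ch where "ch x = (if x \<in> U then (SOME c. c \<in> C \<and> cov x c) else z0)" for x
    have chU: "x \<in> U \<Longrightarrow> ch x \<in> C \<and> cov x (ch x)" for x
    proof -
      assume xU: "x \<in> U"
      then have ex: "\<exists>c. c \<in> C \<and> cov x c" using C(3) by blast
      show "ch x \<in> C \<and> cov x (ch x)" unfolding ch_def using xU someI_ex[OF ex] by simp
    qed
    have chC: "ch x \<in> C'" for x
    proof (cases "x \<in> U")
      case True then show ?thesis using chU[of x] by (simp add: C'_def)
    next
      case False then show ?thesis by (simp add: C'_def ch_def)
    qed
    define t where "t = n * \<delta>"
    have t: "t > 0" using n0 d by (simp add: t_def)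
    define b1 where "b1 = (\<lambda>x. if t \<le> \<bar>(\<Sum>j<n. Dv (x!j)) - n * D\<bar> then 1 else 0::real)"
    define b2 where "b2 = (\<lambda>x. if t \<le> \<bar>(\<Sum>j<n. Iv (x!j)) - n * (Hb p - Hb D)\<bar> then 1 else 0::real)"
    have eb1: "Eb (replicate n px) UNIV b1 \<le> \<epsilon>/8"
    proof -
      have "Eb (replicate n px) UNIV b1 \<le> real n * 4 / t^2" unfolding b1_def by (rule typ_D[OF t])
      also have "\<dots> = 4/(real n*\<delta>^2)" using n0 by (simp add: t_def power2_eq_square)
      finally show ?thesis using Nn by linarith
    qed
    have eb2: "Eb (replicate n px) UNIV b2 \<le> \<epsilon>/8"
    proof -
      have "Eb (replicate n px) UNIV b2 \<le> real n * (4*GI^2) / t^2" unfolding b2_def by (rule typ_I[OF t])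
      also have "\<dots> = 4*GI^2/(real n*\<delta>^2)" using n0 by (simp add: t_def power2_eq_square)
      finally show ?thesis using Nn by linarith
    qed
    have pw: "hdist x (ch x) \<le> n*(D+2*\<delta>) + n * (b1 x + b2 x)" if x: "x \<in> blocks UNIV n" for x
    proof (cases "x \<in> U")
      case True
      then have "hdist x (ch x) \<le> n*(D+2*\<delta>)" using chU cov_def by blast
      moreover have "b1 x \<ge> 0" "b2 x \<ge> 0" by (auto simp: b1_def b2_def)
      ultimately have "0 \<le> real n * (b1 x + b2 x)" by simp
      with \<open>hdist x (ch x) \<le> n*(D+2*\<delta>)\<close> show ?thesis by linarith
    next
      case False
      then have "(\<Sum>j<n. Dv (x!j)) > n*(D+\<delta>) \<or> (\<Sum>j<n. Iv (x!j)) > n*(I+\<delta>)"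
        using x by (auto simp: U_def)
      then have "b1 x = 1 \<or> b2 x = 1" unfolding b1_def b2_def t_def I_def by (auto simp: algebra_simps)
      moreover have "b1 x \<ge> 0" "b2 x \<ge> 0" by (auto simp: b1_def b2_def)
      moreover have "hdist x (ch x) \<le> n" using x by (intro hdist_le) (simp add: blocks_def)
      moreover have "n*(D+2*\<delta>) \<ge> 0" using D0 d by simp
      ultimately have "b1 x + b2 x \<ge> 1" by auto
      then have "real n * 1 \<le> real n * (b1 x + b2 x)" by (intro mult_left_mono) auto
      with \<open>hdist x (ch x) \<le> n\<close> \<open>n*(D+2*\<delta>) \<ge> 0\<close> show ?thesis by linarith
    qed
    have "Eb (replicate n px) UNIV (\<lambda>x. hdist x (dec (enc (ch x)))) = Eb (replicate n px) UNIV (\<lambda>x. hdist x (ch x))"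
      using ed chC by (intro Eb_cong) auto
    also have "\<dots> \<le> Eb (replicate n px) UNIV (\<lambda>x. n*(D+2*\<delta>) + n * (b1 x + b2 x))"
      using pw px_pos by (intro Eb_mono) (auto intro: less_imp_le)
    also have "\<dots> = n*(D+2*\<delta>) + n * (Eb (replicate n px) UNIV b1 + Eb (replicate n px) UNIV b2)"
    proof -
      have "Eb (replicate n px) UNIV (\<lambda>_. real n * (D + 2 * \<delta>)) = real n * (D + 2 * \<delta>)"
        by (rule Eb_const) (simp_all add: good_px)
      then show ?thesis by (simp add: Eb_add Eb_cmult)
    qed
    also have "\<dots> \<le> n*(D+2*\<delta>) + n * (\<epsilon>/8 + \<epsilon>/8)"
      using eb1 eb2 by (intro add_left_mono mult_left_mono) auto
    also have "\<dots> \<le> n * (D + \<epsilon>)"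
    proof -
      have "D + 2*\<delta> + (\<epsilon>/8 + \<epsilon>/8) \<le> D + \<epsilon>" using e by (simp add: \<delta>_def)
      then have "n * (D + 2*\<delta> + (\<epsilon>/8 + \<epsilon>/8)) \<le> n * (D + \<epsilon>)" by (intro mult_left_mono) auto
      then show ?thesis by (simp add: algebra_simps)
    qed
    finally have dist: "Eb (replicate n px) UNIV (\<lambda>x. hdist x (dec (enc (ch x)))) \<le> n * (D + \<epsilon>)" .
    show "\<exists>(enc::bool list \<Rightarrow> nat) (dec::nat \<Rightarrow> bool list).
     (\<forall>x. length x = n \<longrightarrow> enc x \<in> {1..msgs n R}) \<and>
     Eb (replicate n px) UNIV (\<lambda>x. hdist x (dec (enc x))) \<le> n * (D + \<epsilon>)"
      using dist ed chC by (intro exI[of _ "\<lambda>x. enc (ch x)"] exI[of _ dec]) auto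
  qed
qed

end



lemma Eb_marg_gen:
  assumes A: "finite A" and B: "finite B" and gAB: "g ` A \<subseteq> B"
  shows "Eb qs A (\<lambda>zs. \<Phi> (map g zs)) = Eb (map (\<lambda>q b. \<Sum>z\<in>{z\<in>A. g z = b}. q z) qs) B \<Phi>"
proof (induction qs arbitrary: \<Phi>)
  case Nil then show ?case by (simp add: Eb_Nil)
next
  case (Cons q qs)
  define qs' where "qs' = map (\<lambda>q b. \<Sum>z\<in>{z\<in>A. g z = b}. q z) qs"
  define F where "F b = Eb qs' B (\<lambda>bs. \<Phi> (b#bs))" for b
  have IH': "Eb qs A (\<lambda>zs. \<Phi> (g z # map g zs)) = F (g z)" for z
    unfolding F_def qs'_def using Cons.IH[of "\<lambda>bs. \<Phi> (g z # bs)"] by simp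
  have "Eb (q#qs) A (\<lambda>zs. \<Phi> (map g zs)) = (\<Sum>z\<in>A. q z * F (g z))"
    by (simp add: Eb_Cons[OF A] IH')
  also have "\<dots> = (\<Sum>b\<in>B. \<Sum>z\<in>{z. z\<in>A \<and> g z = b}. q z * F (g z))"
    by (rule sum.group[OF A B gAB, symmetric])
  also have "\<dots> = (\<Sum>b\<in>B. (\<Sum>z\<in>{z\<in>A. g z = b}. q z) * F b)"
    by (intro sum.cong refl) (simp add: sum_distrib_right)
  also have "\<dots> = Eb (map (\<lambda>q b. \<Sum>z\<in>{z\<in>A. g z = b}. q z) (q#qs)) B \<Phi>"
    by (simp add: Eb_Cons[OF B] F_def qs'_def)
  finally show ?case .
qed

lemma pmf_map_sum:
  assumes "finite (set_pmf P)"
  shows "pmf (map_pmf g P) b = (\<Sum>z\<in>{z\<in>set_pmf P. g z = b}. pmf P z)"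
proof -
  have "pmf (map_pmf g P) b = measure P (g -` {b} \<inter> set_pmf P)"
    by (simp add: pmf_map measure_Int_set_pmf)
  also have "\<dots> = (\<Sum>z\<in>g -` {b} \<inter> set_pmf P. pmf P z)"
    using assms by (intro measure_measure_pmf_finite) auto
  also have "g -` {b} \<inter> set_pmf P = {z\<in>set_pmf P. g z = b}" by auto
  finally show ?thesis .
qed

lemma Eb_marg:
  assumes "finite (set_pmf P)"
  shows "Eb (replicate n (pmf P)) (set_pmf P) (\<lambda>zs. \<Phi> (map g zs))
       = Eb (replicate n (pmf (map_pmf g P))) (set_pmf (map_pmf g P)) \<Phi>"
proof -
  have "Eb (replicate n (pmf P)) (set_pmf P) (\<lambda>zs. \<Phi> (map g zs))
      = Eb (map (\<lambda>q b. \<Sum>z\<in>{z\<in>set_pmf P. g z = b}. q z) (replicate n (pmf P))) (set_pmf (map_pmf g P)) \<Phi>"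
    using assms by (intro Eb_marg_gen) auto
  also have "map (\<lambda>q b. \<Sum>z\<in>{z\<in>set_pmf P. g z = b}. q z) (replicate n (pmf P)) = replicate n (pmf (map_pmf g P))"
  proof -
    have "(\<lambda>b. \<Sum>z\<in>{z\<in>set_pmf P. g z = b}. pmf P z) = pmf (map_pmf g P)"
      by (intro ext) (simp only: pmf_map_sum[OF assms])
    then show ?thesis by simp
  qed
  finally show ?thesis .
qed

lemma avg_dist_Eb:
  "avg_dist P n f d Fhat = (1 / real n) * Eb (replicate n (pmf P)) (set_pmf P)
     (\<lambda>zs. \<Sum>j<n. d (f (fst (zs ! j)) (snd (zs ! j))) (Fhat (map fst zs) (map snd zs) j))"
  unfolding avg_dist_def Eb_def
  by (simp add: sum_distrib_left sum.swap[of _ "{..<n}"])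

definition "S3 = {1::nat,2,3}"
abbreviation "U3 \<equiv> pmf_of_set S3"

lemma S3: "finite S3" "S3 \<noteq> {}" "card S3 = 3" by (auto simp: S3_def)

lemma set_ex_src: "0 < p \<Longrightarrow> p < 1 \<Longrightarrow> set_pmf (ex_src p) = (S3 \<times> UNIV) \<times> S3"
  by (simp add: ex_src_def S3_def)

lemma ex_src_pair: "map_pmf (\<lambda>z. (fst (fst z), snd z)) (ex_src p) = pair_pmf U3 U3"
proof -
  have "map_pmf (\<lambda>z. (fst (fst z), snd z)) (ex_src p) = map_pmf (\<lambda>(a, b). (fst a, id b)) (ex_src p)"
    by (intro map_pmf_cong) auto
  also have "\<dots> = pair_pmf U3 U3" unfolding ex_src_def map_pair by (simp add: map_fst_pair_pmf S3_def)
  finally show ?thesis .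
qed

lemma pmf_U3U3: "pmf (pair_pmf U3 U3) (a, c) = (if a \<in> S3 \<and> c \<in> S3 then 1/9 else 0)"
  using S3 by (simp add: pmf_pair indicator_def)

lemma ex_f1_dist: "map_pmf (\<lambda>z. ex_f1 (fst z) (snd z)) (ex_src p) = bernoulli_pmf (1/3)"
proof -
  have "map_pmf (\<lambda>(a,c). a = c) (pair_pmf U3 U3) = map_pmf (\<lambda>(a,c). a = c) (map_pmf (\<lambda>z. (fst (fst z), snd z)) (ex_src p))"
    by (simp only: ex_src_pair)
  also have "\<dots> = map_pmf (\<lambda>z. ex_f1 (fst z) (snd z)) (ex_src p)"
    by (simp add: pmf.map_comp comp_def ex_f1_def)
  finally have "map_pmf (\<lambda>z. ex_f1 (fst z) (snd z)) (ex_src p) = map_pmf (\<lambda>(a,c). a = c) (pair_pmf U3 U3)" ..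
  also have "\<dots> = bernoulli_pmf (1/3)"
  proof (rule pmf_eqI)
    fix b :: bool
    have fin: "finite (set_pmf (pair_pmf U3 U3))" using S3 by simp
    have "pmf (map_pmf (\<lambda>(a,c). a = c) (pair_pmf U3 U3)) b =
          (\<Sum>z\<in>{z\<in>S3 \<times> S3. (case z of (a,c) \<Rightarrow> a = c) = b}. pmf (pair_pmf U3 U3) z)"
      using pmf_map_sum[OF fin] S3 by simp
    also have "\<dots> = (\<Sum>z\<in>{z\<in>S3 \<times> S3. (case z of (a,c) \<Rightarrow> a = c) = b}. 1/9)"
      by (intro sum.cong refl) (auto simp: pmf_U3U3)
    also have "\<dots> = pmf (bernoulli_pmf (1/3)) b"
    proof (cases b)
      case True
      have "{z\<in>S3 \<times> S3. (case z of (a,c) \<Rightarrow> a = c) = b} = {(1,1),(2,2),(3,3)}"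
        using True by (auto simp: S3_def)
      then show ?thesis using True by simp
    next
      case False
      have "{z\<in>S3 \<times> S3. (case z of (a,c) \<Rightarrow> a = c) = b} = {(1,2),(1,3),(2,1),(2,3),(3,1),(3,2)}"
        using False by (auto simp: S3_def)
      then show ?thesis using False by simp
    qed
    finally show "pmf (map_pmf (\<lambda>(a,c). a = c) (pair_pmf U3 U3)) b = pmf (bernoulli_pmf (1/3)) b" .
  qed
  finally show ?thesis .
qed

lemma ex_f2_dist: "map_pmf (\<lambda>z. snd (fst z)) (ex_src p) = bernoulli_pmf p"
proof -
  have "map_pmf (\<lambda>z. snd (fst z)) (ex_src p) = map_pmf snd (map_pmf fst (ex_src p))"
    by (simp add: pmf.map_comp comp_def)
  then show ?thesis by (simp add: ex_src_def map_fst_pair_pmf map_snd_pair_pmf)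
qed

lemma entropy_const:
  assumes "\<And>x. x \<in> set_pmf q \<Longrightarrow> pmf q x = c"
  shows "entropy_pmf q = - real (card (set_pmf q)) * (c * log 2 c)"
  unfolding entropy_pmf_def using assms by simp

lemma entropy_U3: "entropy_pmf U3 = log 2 3"
proof -
  have "entropy_pmf U3 = - real (card S3) * ((1/3) * log 2 (1/3))"
    using S3 by (subst entropy_const[of _ "1/3"]) auto
  then show ?thesis using S3 by (simp add: log_divide)
qed

lemma entropy_U3U3: "entropy_pmf (pair_pmf U3 U3) = 2 * log 2 3"
proof -
  have "entropy_pmf (pair_pmf U3 U3) = - real (card (S3 \<times> S3)) * ((1/9) * log 2 (1/9))"
    using S3 by (subst entropy_const[of _ "1/9"]) (auto simp: pmf_U3U3)
  also have "log 2 (1/9::real) = - (2 * log 2 3)"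
  proof -
    have "log 2 (9::real) = log 2 (3^2)" by simp
    also have "\<dots> = 2 * log 2 3" by (subst log_nat_power) auto
    finally show ?thesis by (simp add: log_divide)
  qed
  finally show ?thesis using S3 by (simp add: card_cartesian_product)
qed

lemma cond_entropy_ex: "cond_entropy_pmf (map_pmf (\<lambda>((x1, x2), y). (x1, y)) (ex_src p)) = log 2 3"
proof -
  have "map_pmf (\<lambda>((x1, x2), y). (x1, y)) (ex_src p) = map_pmf (\<lambda>z. (fst (fst z), snd z)) (ex_src p)"
    by (intro map_pmf_cong) auto
  then have e: "map_pmf (\<lambda>((x1, x2), y). (x1, y)) (ex_src p) = pair_pmf U3 U3" using ex_src_pair by simp
  show ?thesis unfolding cond_entropy_pmf_def e map_snd_pair_pmf entropy_U3U3 entropy_U3 by simp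
qed

lemma entropy_f1: "entropy_pmf (map_pmf (\<lambda>(x, y). ex_f1 x y) (ex_src p)) = Hb (1/3)"
proof -
  have "map_pmf (\<lambda>(x, y). ex_f1 x y) (ex_src p) = map_pmf (\<lambda>z. ex_f1 (fst z) (snd z)) (ex_src p)"
    by (intro map_pmf_cong) auto
  then have e: "map_pmf (\<lambda>(x, y). ex_f1 x y) (ex_src p) = bernoulli_pmf (1/3)" using ex_f1_dist by simp
  show ?thesis unfolding e entropy_pmf_def Hb_def
    by (simp add: UNIV_bool)
qed




lemma px_bern: "0 \<le> p \<Longrightarrow> p \<le> 1 \<Longrightarrow> (\<lambda>b. if b then p else 1 - p) = pmf (bernoulli_pmf p)"
  by (rule ext) simp

lemma code_X2:
  assumes p: "0 < p" "p \<le> 1/2" and D: "0 \<le> D2" "D2 \<le> p" and RX: "RX > Hb p - Hb D2" and e: "\<epsilon> > 0"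
  shows "\<exists>N. \<forall>n\<ge>N. \<exists>(enc::bool list \<Rightarrow> nat) (dec::nat \<Rightarrow> bool list).
     (\<forall>x. length x = n \<longrightarrow> enc x \<in> {1..msgs n RX}) \<and>
     Eb (replicate n (pmf (bernoulli_pmf p))) UNIV (\<lambda>x. hdist x (dec (enc x))) \<le> n * (D2 + \<epsilon>)"
proof (cases "D2 < p")
  case True
  interpret bsrc p D2 using True p D by unfold_locales auto
  have "px = pmf (bernoulli_pmf p)" unfolding px_def[abs_def] using p by (intro px_bern) auto
  then show ?thesis using lossy[OF RX e] by simp
next
  case False
  then have Dp: "D2 = p" using D by simp
  have RX0: "RX > 0" using RX Dp by simp
  show ?thesis
  proof (intro exI[of _ 0] allI impI)
    fix n :: nat
    have m1: "1 \<le> msgs n RX"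
    proof -
      have "1 \<le> 2 powr (real n * RX)" using RX0 by (intro ge_one_powr_ge_zero) auto
      then show ?thesis unfolding msgs_def by (simp add: le_nat_floor)
    qed
    have gw: "good_ws (replicate n (pmf (bernoulli_pmf p))) UNIV"
      using p by (auto simp: good_ws_def UNIV_bool)
    have "Eb (replicate n (pmf (bernoulli_pmf p))) UNIV (\<lambda>x. hdist x (replicate n False))
        = Eb (replicate n (pmf (bernoulli_pmf p))) UNIV (Ssum (replicate n (\<lambda>b. hamming b False)))"
      by (intro Eb_cong) (auto simp: hdist_def Ssum_def blocks_def)
    also have "\<dots> = meanS (replicate n (\<lambda>b. hamming b False)) (replicate n (pmf (bernoulli_pmf p))) UNIV"
      using gw by (intro Eb_Ssum) auto
    also have "\<dots> = n * p" using p by (simp add: meanS_def UNIV_bool hamming_def)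
    also have "\<dots> \<le> n * (D2 + \<epsilon>)" using Dp e by (intro mult_left_mono) auto
    finally show "\<exists>(enc::bool list \<Rightarrow> nat) (dec::nat \<Rightarrow> bool list).
     (\<forall>x. length x = n \<longrightarrow> enc x \<in> {1..msgs n RX}) \<and>
     Eb (replicate n (pmf (bernoulli_pmf p))) UNIV (\<lambda>x. hdist x (dec (enc x))) \<le> n * (D2 + \<epsilon>)"
      using m1 by (intro exI[of _ "\<lambda>_. 1"] exI[of _ "\<lambda>_. replicate n False"]) auto
  qed
qed

lemma code_f1:
  assumes RY: "RY > Hb (1/3)" and e: "(\<epsilon>::real) > 0"
  shows "\<exists>N. \<forall>n\<ge>N. \<exists>(enc::bool list \<Rightarrow> nat) (dec::nat \<Rightarrow> bool list).
     (\<forall>x. length x = n \<longrightarrow> enc x \<in> {1..msgs n RY}) \<and>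
     Eb (replicate n (pmf (bernoulli_pmf (1/3)))) UNIV (\<lambda>x. hdist x (dec (enc x))) \<le> real n * \<epsilon>"
proof -
  interpret bsrc "1/3" 0 by unfold_locales auto
  have "px = pmf (bernoulli_pmf (1/3))" unfolding px_def[abs_def] by (intro px_bern) auto
  moreover have "RY > Hb (1/3) - Hb 0" using RY by (simp add: Hb_def)
  ultimately show ?thesis using lossy[of RY \<epsilon>] e by simp
qed

lemma msgs_3: "R0 > log 2 3 \<Longrightarrow> 3^n \<le> msgs n R0"
proof -
  assume R: "R0 > log 2 3"
  have "2 powr (real n * log 2 3) = (2 powr (log 2 3)) powr real n" unfolding powr_powr by (simp add: mult.commute)
  also have "\<dots> = 3 powr real n" by simp
  also have "\<dots> = (3::real)^n" by (simp add: powr_realpow)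
  finally have "(3::real)^n = 2 powr (real n * log 2 3)" ..
  also have "\<dots> \<le> 2 powr (real n * R0)" using R by (intro powr_mono mult_left_mono) auto
  finally have h: "real (3^n) \<le> 2 powr (real n * R0)" by simp
  show ?thesis unfolding msgs_def by (rule le_nat_floor[OF h])
qed

lemma part1:
  assumes p: "0 < p" "p \<le> 1/2" and D: "0 \<le> D2" "D2 \<le> p"
    and R0: "R0 > log 2 3" and RX: "RX > Hb p - Hb D2" and RY: "RY > Hb (1/3)"
  shows "achievable (ex_src p) ex_f1 ex_f2 hamming hamming R0 RX RY 0 D2"
  unfolding achievable_def
proof (intro allI impI)
  fix \<epsilon> :: real assume e: "\<epsilon> > 0"
  obtain N1 where N1: "\<And>n. n \<ge> N1 \<Longrightarrow> \<exists>(enc::bool list \<Rightarrow> nat) (dec::nat \<Rightarrow> bool list).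
     (\<forall>x. length x = n \<longrightarrow> enc x \<in> {1..msgs n RY}) \<and>
     Eb (replicate n (pmf (bernoulli_pmf (1/3)))) UNIV (\<lambda>x. hdist x (dec (enc x))) \<le> real n * \<epsilon>"
    using code_f1[OF RY e] by blast
  obtain N2 where N2: "\<And>n. n \<ge> N2 \<Longrightarrow> \<exists>(enc::bool list \<Rightarrow> nat) (dec::nat \<Rightarrow> bool list).
     (\<forall>x. length x = n \<longrightarrow> enc x \<in> {1..msgs n RX}) \<and>
     Eb (replicate n (pmf (bernoulli_pmf p))) UNIV (\<lambda>x. hdist x (dec (enc x))) \<le> n * (D2 + \<epsilon>)"
    using code_X2[OF p D RX e] by blast
  define P where "P = ex_src p"
  have sP: "set_pmf P = (S3 \<times> UNIV) \<times> S3" unfolding P_def using p by (intro set_ex_src) auto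
  have fP: "finite (set_pmf P)" using S3 by (simp add: sP)
  show "\<exists>N. \<forall>n\<ge>N. \<exists>(phi0 :: (nat \<times> bool) list \<Rightarrow> nat) (phiX :: (nat \<times> bool) list \<Rightarrow> nat)
        (phiY :: nat list \<Rightarrow> nat \<Rightarrow> nat) (psi1 :: nat \<Rightarrow> nat \<Rightarrow> nat \<Rightarrow> bool)
        (psi2 :: nat \<Rightarrow> nat \<Rightarrow> nat \<Rightarrow> bool).
        is_code n R0 RX RY phi0 phiX phiY \<and>
        avg_dist (ex_src p) n ex_f1 hamming (\<lambda>xs ys. psi1 (phiX xs) (phiY ys (phi0 xs))) \<le> 0 + \<epsilon> \<and>
        avg_dist (ex_src p) n ex_f2 hamming (\<lambda>xs ys. psi2 (phiX xs) (phiY ys (phi0 xs))) \<le> D2 + \<epsilon>"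
  proof (intro exI[of _ "max 1 (max N1 N2)"] allI impI)
    fix n :: nat assume n: "n \<ge> max 1 (max N1 N2)"
    then have n0: "n > 0" by simp
    obtain encB decB where EB: "\<forall>x. length x = n \<longrightarrow> encB x \<in> {1..msgs n RY}"
      "Eb (replicate n (pmf (bernoulli_pmf (1/3)))) UNIV (\<lambda>x. hdist x (decB (encB x))) \<le> real n * \<epsilon>"
      using N1[of n] n by auto
    obtain encX decX where EX: "\<forall>x. length x = n \<longrightarrow> encX x \<in> {1..msgs n RX}"
      "Eb (replicate n (pmf (bernoulli_pmf p))) UNIV (\<lambda>x. hdist x (decX (encX x))) \<le> n * (D2 + \<epsilon>)"
      using N2[of n] n by auto
    define S where "S = blocks S3 n"
    have fS: "finite S" using S3 by (simp add: S_def finite_blocks)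
    have cS: "card S \<le> msgs n R0" using msgs_3[OF R0, of n] S3 by (simp add: S_def card_blocks)
    have m1: "1 \<le> msgs n R0" using cS msgs_3[OF R0, of n] by (meson le_trans one_le_power zero_less_numeral one_le_numeral)
    obtain enc0 dec0 where E0: "\<forall>c\<in>S. enc0 c \<in> {1..msgs n R0} \<and> dec0 (enc0 c) = c"
      using encoding[OF fS cS] by blast
    define phi0 where "phi0 xs = (if map fst xs \<in> S then enc0 (map fst xs) else 1)" for xs :: "(nat \<times> bool) list"
    define phiX where "phiX xs = encX (map snd xs)" for xs :: "(nat \<times> bool) list"
    define phiY where "phiY ys m = encB (map (\<lambda>j. dec0 m ! j = ys ! j) [0..<n])" for ys :: "nat list" and m
    define psi1 where "psi1 i k j = decB k ! j" for i k j :: nat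
    define psi2 where "psi2 i k j = decX i ! j" for i k j :: nat
    have code: "is_code n R0 RX RY phi0 phiX phiY"
      unfolding is_code_def phi0_def phiX_def phiY_def using E0 EX(1) EB(1) m1 by auto
    define g1 where "g1 z = ex_f1 (fst z) (snd z)" for z :: "(nat \<times> bool) \<times> nat"
    define g2 where "g2 z = snd (fst z)" for z :: "(nat \<times> bool) \<times> nat"
    have zsS: "map fst (map fst zs) \<in> S" if "zs \<in> blocks (set_pmf P) n" for zs
      using that sP by (auto simp: S_def blocks_def)
    have bits: "map (\<lambda>j. dec0 (phi0 (map fst zs)) ! j = map snd zs ! j) [0..<n] = map g1 zs"
      if "zs \<in> blocks (set_pmf P) n" for zs
    proof -
      have l: "length zs = n" using that by (simp add: blocks_def)
      have "dec0 (phi0 (map fst zs)) = map fst (map fst zs)"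
        using zsS[OF that] E0 by (simp add: phi0_def)
      then show ?thesis using l by (intro nth_equalityI) (auto simp: g1_def ex_f1_def)
    qed
    have d1: "avg_dist (ex_src p) n ex_f1 hamming (\<lambda>xs ys. psi1 (phiX xs) (phiY ys (phi0 xs))) \<le> 0 + \<epsilon>"
    proof -
      have "avg_dist P n ex_f1 hamming (\<lambda>xs ys. psi1 (phiX xs) (phiY ys (phi0 xs)))
          = (1 / real n) * Eb (replicate n (pmf P)) (set_pmf P) (\<lambda>zs. hdist (map g1 zs) (decB (encB (map g1 zs))))"
        unfolding avg_dist_Eb
      proof (intro arg_cong2[where f="(*)"] refl Eb_cong)
        fix zs assume zs: "zs \<in> blocks (set_pmf P) (length (replicate n (pmf P)))"
        then have zs': "zs \<in> blocks (set_pmf P) n" by simp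
        have l: "length zs = n" using zs' by (simp add: blocks_def)
        show "(\<Sum>j<n. hamming (ex_f1 (fst (zs ! j)) (snd (zs ! j)))
                (psi1 (phiX (map fst zs)) (phiY (map snd zs) (phi0 (map fst zs))) j))
            = hdist (map g1 zs) (decB (encB (map g1 zs)))"
          unfolding psi1_def phiY_def bits[OF zs'] hdist_def using l by (simp add: g1_def)
      qed
      also have "\<dots> = (1 / real n) * Eb (replicate n (pmf (bernoulli_pmf (1/3)))) UNIV (\<lambda>x. hdist x (decB (encB x)))"
        using Eb_marg[OF fP, of n "\<lambda>x. hdist x (decB (encB x))" g1] ex_f1_dist[of p]
        by (simp add: P_def g1_def[abs_def])
      also have "\<dots> \<le> (1 / real n) * (n * \<epsilon>)" using EB(2) by (intro mult_left_mono) auto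
      also have "\<dots> = \<epsilon>" using n0 by simp
      finally show ?thesis by (simp add: P_def)
    qed
    have d2: "avg_dist (ex_src p) n ex_f2 hamming (\<lambda>xs ys. psi2 (phiX xs) (phiY ys (phi0 xs))) \<le> D2 + \<epsilon>"
    proof -
      have "avg_dist P n ex_f2 hamming (\<lambda>xs ys. psi2 (phiX xs) (phiY ys (phi0 xs)))
          = (1 / real n) * Eb (replicate n (pmf P)) (set_pmf P) (\<lambda>zs. hdist (map g2 zs) (decX (encX (map g2 zs))))"
        unfolding avg_dist_Eb
      proof (intro arg_cong2[where f="(*)"] refl Eb_cong)
        fix zs assume zs: "zs \<in> blocks (set_pmf P) (length (replicate n (pmf P)))"
        then have l: "length zs = n" by (simp add: blocks_def)
        have mg: "map snd (map fst zs) = map g2 zs" by (simp add: g2_def)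
        show "(\<Sum>j<n. hamming (ex_f2 (fst (zs ! j)) (snd (zs ! j)))
                (psi2 (phiX (map fst zs)) (phiY (map snd zs) (phi0 (map fst zs))) j))
            = hdist (map g2 zs) (decX (encX (map g2 zs)))"
          unfolding psi2_def phiX_def mg hdist_def using l by (simp add: g2_def ex_f2_def)
      qed
      also have "\<dots> = (1 / real n) * Eb (replicate n (pmf (bernoulli_pmf p))) UNIV (\<lambda>x. hdist x (decX (encX x)))"
        using Eb_marg[OF fP, of n "\<lambda>x. hdist x (decX (encX x))" g2] ex_f2_dist[of p] p
        by (simp add: P_def g2_def[abs_def])
      also have "\<dots> \<le> (1 / real n) * (n * (D2 + \<epsilon>))" using EX(2) by (intro mult_left_mono) auto
      also have "\<dots> = D2 + \<epsilon>" using n0 by simp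
      finally show ?thesis by (simp add: P_def)
    qed
    show "\<exists>(phi0 :: (nat \<times> bool) list \<Rightarrow> nat) (phiX :: (nat \<times> bool) list \<Rightarrow> nat)
        (phiY :: nat list \<Rightarrow> nat \<Rightarrow> nat) (psi1 :: nat \<Rightarrow> nat \<Rightarrow> nat \<Rightarrow> bool)
        (psi2 :: nat \<Rightarrow> nat \<Rightarrow> nat \<Rightarrow> bool).
        is_code n R0 RX RY phi0 phiX phiY \<and>
        avg_dist (ex_src p) n ex_f1 hamming (\<lambda>xs ys. psi1 (phiX xs) (phiY ys (phi0 xs))) \<le> 0 + \<epsilon> \<and>
        avg_dist (ex_src p) n ex_f2 hamming (\<lambda>xs ys. psi2 (phiX xs) (phiY ys (phi0 xs))) \<le> D2 + \<epsilon>"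
      using code d1 d2 by blast
  qed
qed

theorem mainTheorem8:
  fixes p D2 :: real
  assumes "0 < p" and "p \<le> 1/2" and "0 \<le> D2" and "D2 \<le> p" and "D2 < 1/2"
  shows "(\<forall>R0 RX RY. R0 > log 2 3 \<and> RX > Hb p - Hb D2 \<and> RY > Hb (1/3) \<longrightarrow>
            achievable (ex_src p) ex_f1 ex_f2 hamming hamming R0 RX RY 0 D2)
       \<and> (\<forall>R0. R0 > cond_entropy_pmf (map_pmf (\<lambda>((x1, x2), y). (x1, y)) (ex_src p)) \<longrightarrow>
            (\<forall>\<delta>>0. \<exists>RX RY.
               achievable (ex_src p) ex_f1 ex_f2 hamming hamming R0 RX RY 0 D2 \<and>
               RX + RY < entropy_pmf (map_pmf (\<lambda>(x, y). ex_f1 x y) (ex_src p))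
                          + Hb p - Hb D2 + \<delta>))"
proof (intro conjI allI impI)
  fix R0 RX RY assume "log 2 3 < R0 \<and> Hb p - Hb D2 < RX \<and> Hb (1 / 3) < RY"
  then show "achievable (ex_src p) ex_f1 ex_f2 hamming hamming R0 RX RY 0 D2"
    using part1 assms by blast
next
  fix R0 \<delta> :: real
  assume R0: "cond_entropy_pmf (map_pmf (\<lambda>((x1, x2), y). (x1, y)) (ex_src p)) < R0" and d: "\<delta> > 0"
  then have R0': "log 2 3 < R0" by (simp add: cond_entropy_ex)
  define RX where "RX = Hb p - Hb D2 + \<delta>/3"
  define RY where "RY = Hb (1/3) + \<delta>/3"
  have "achievable (ex_src p) ex_f1 ex_f2 hamming hamming R0 RX RY 0 D2"
    using part1[OF assms(1,2,3,4) R0'] d by (simp add: RX_def RY_def)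
  moreover have "RX + RY < entropy_pmf (map_pmf (\<lambda>(x, y). ex_f1 x y) (ex_src p)) + Hb p - Hb D2 + \<delta>"
    using d by (simp add: entropy_f1 RX_def RY_def)
  ultimately show "\<exists>RX RY. achievable (ex_src p) ex_f1 ex_f2 hamming hamming R0 RX RY 0 D2 \<and>
               RX + RY < entropy_pmf (map_pmf (\<lambda>(x, y). ex_f1 x y) (ex_src p)) + Hb p - Hb D2 + \<delta>"
    by blast
qed


end
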